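(* Let $n,m,p,N\in\mathbb{N}_+$, $B\in\mathbb{R}^{n\times m}$, $C\in\mathbb{R}^{p\times n}$ of full column rank, $x_0\in\mathbb{R}^n$, $r_1,\dots,r_N\in\mathbb{R}^p$, $r_0:=Cx_0$, $A^{\rm r}\in\mathbb{R}^{n\times n}$, $u^{\rm r}_0,\dots,u^{\rm r}_{N-1}\in\mathbb{R}^m$, $\omega,\omega_0,\dots,\omega_{N-1}\ge0$, and $\mathcal{S}_{\rm M2}\subseteq\mathbb{R}^{n\times n}\times\mathbb{R}^{m\times N}$. Problem (MOPUL2) is: minimize $\|A-A^{\rm r}\|_F$ over $A\in\mathbb{R}^{n\times n}$, $U=(u_0,\dots,u_{N-1})\in\mathbb{R}^{m\times N}$ subject to $x_t=Ax_{t-1}+Bu_{t-1}$ ($t=1,\dots,N$), $y_t=Cx_t$ ($t=0,\dots,N$), $\sum_{t=1}^N\|y_t-r_t\|_2\le\omega$, $\|u_t-u^{\rm r}_t\|_2\le\omega_t$ ($t=0,\dots,N-1$), and $(A,U)\in\mathcal{S}_{\rm M2}$. Let $\beta>0$, $\tilde\omega:=\omega/\big(\sum_{i=0}^{N-1}\beta^i\big)$, and let problem (AMOPUL2) be: minimize $\|A-A^{\rm r}\|_F$ over $(A,U)$ subject to $\sum_{t=1}^N\|CAC^{\dagger}r_{t-1}+CBu_{t-1}-r_t\|_2\le\tilde\omega$, $\|u_t-u^{\rm r}_t\|_2\le\omega_t$ ($t=0,\dots,N-1$), and $(A,U)\in\mathcal{S}_{\rm M2}$. If $\|CA^{\rm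 a}C^{\dagger}\|_2\le\beta$ for every feasible $A^{\rm a}$ of (AMOPUL2), then every feasible solution of (AMOPUL2) is feasible for (MOPUL2), and the optimal objective value of (AMOPUL2) is an upper bound for the optimal objective value of (MOPUL2).
   Context: $C^{\dagger}$ is the Moore–Penrose inverse of $C$; $\|\cdot\|_F$ is the Frobenius norm; $\|\cdot\|_2$ is the Euclidean norm for vectors and the spectral norm for matrices. In the paper $\mathcal{S}_{\rm M2}$ is assumed SD representable, though this is not used in the claim. *)

theory Defs
  imports "HOL-Analysis.Analysis"
begin

definition mp_pinv :: "real^'n^'p \<Rightarrow> real^'p^'n" where
  "mp_pinv C = (THE X. C ** X ** C = C \<and> X ** C ** X = X \<and>
      transpose (C ** X) = C ** X \<and> transpose (X ** C) = X ** C)"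

definition frob_norm :: "real^'n^'m \<Rightarrow> real" where
  "frob_norm M = sqrt (\<Sum>i\<in>UNIV. \<Sum>j\<in>UNIV. (M $ i $ j)^2)"

definition spec_norm :: "real^'n^'m \<Rightarrow> real" where
  "spec_norm M = onorm (\<lambda>x. M *v x)"

fun state :: "real^'n^'n \<Rightarrow> real^'m^'n \<Rightarrow> (real^'m) list \<Rightarrow> real^'n \<Rightarrow> nat \<Rightarrow> real^'n" where
  "state A B U x0 0 = x0"
| "state A B U x0 (Suc t) = A *v state A B U x0 t + B *v (U ! t)"

definition mopul2_feasible ::
  "nat \<Rightarrow> real^'m^'n \<Rightarrow> real^'n^'p \<Rightarrow> real^'n \<Rightarrow> (nat \<Rightarrow> real^'p) \<Rightarrow> (nat \<Rightarrow> real^'m)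
   \<Rightarrow> real \<Rightarrow> (nat \<Rightarrow> real) \<Rightarrow> ((real^'n^'n) \<times> (real^'m) list) set
   \<Rightarrow> ((real^'n^'n) \<times> (real^'m) list) set" where
  "mopul2_feasible N B C x0 r ur \<omega> \<omega>s S =
     {(A, U). length U = N \<and>
        (\<Sum>t=1..N. norm (C *v state A B U x0 t - r t)) \<le> \<omega> \<and>
        (\<forall>t<N. norm (U ! t - ur t) \<le> \<omega>s t) \<and> (A, U) \<in> S}"

definition amopul2_feasible ::
  "nat \<Rightarrow> real^'m^'n \<Rightarrow> real^'n^'p \<Rightarrow> (nat \<Rightarrow> real^'p) \<Rightarrow> (nat \<Rightarrow> real^'m)
   \<Rightarrow> real \<Rightarrow> real \<Rightarrow> (nat \<Rightarrow> real) \<Rightarrow> ((real^'n^'n) \<times> (real^'m) list) set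
   \<Rightarrow> ((real^'n^'n) \<times> (real^'m) list) set" where
  "amopul2_feasible N B C r ur \<beta> \<omega> \<omega>s S =
     {(A, U). length U = N \<and>
        (\<Sum>t=1..N. norm (((C ** A) ** mp_pinv C) *v r (t - 1) + C *v (B *v (U ! (t - 1))) - r t))
           \<le> \<omega> / (\<Sum>i<N. \<beta> ^ i) \<and>
        (\<forall>t<N. norm (U ! t - ur t) \<le> \<omega>s t) \<and> (A, U) \<in> S}"

text \<open>Optimal value: infimum of the objective over the feasible set (+\<infinity> if infeasible).\<close>
definition opt_val :: "real^'n^'n \<Rightarrow> ((real^'n^'n) \<times> 'u) set \<Rightarrow> ereal" where
  "opt_val Ar F = (INF (A, U)\<in>F. ereal (frob_norm (A - Ar)))"

end

theory Submission imports Defs begin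

lemma pinv_left:
  fixes C :: "real^'n^'p"
  assumes "rank C = CARD('n)"
  shows "mp_pinv C ** C = mat 1"
proof -
  have injC: "inj ((*v) C)" using assms full_rank_injective by blast
  define G where "G = transpose C ** C"
  have injG: "inj ((*v) G)"
  proof (rule injI)
    fix x y assume h: "G *v x = G *v y"
    have "G *v (x - y) = 0" using h by (simp add: matrix_vector_mult_diff_distrib)
    then have "inner (C *v (x - y)) (C *v (x - y)) = 0"
      using dot_lmul_matrix[of "C *v (x - y)" C "x - y"]
      by (simp add: G_def matrix_vector_mul_assoc[symmetric])
    then have "C *v (x - y) = 0" by simp
    then have "C *v x = C *v y" by (simp add: matrix_vector_mult_diff_distrib)
    then show "x = y" using injC by (simp add: inj_eq)
  qed
  then obtain Gi where Gi: "Gi ** G = mat 1"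
    using matrix_left_invertible_injective by blast
  have GGi: "G ** Gi = mat 1"
    using Gi matrix_left_right_inverse by blast
  have Gsym: "transpose G = G" by (simp add: G_def matrix_transpose_mul)
  have Gisym: "transpose Gi = Gi"
  proof -
    have "transpose Gi = (Gi ** G) ** transpose Gi" using Gi by simp
    also have "\<dots> = Gi ** transpose (Gi ** G)"
      by (simp add: matrix_mul_assoc[symmetric] matrix_transpose_mul Gsym)
    also have "\<dots> = Gi" using Gi by (simp add: transpose_mat)
    finally show ?thesis .
  qed
  define X0 where "X0 = Gi ** transpose C"
  have X0C: "X0 ** C = mat 1" using Gi by (simp add: X0_def G_def matrix_mul_assoc)
  let ?P = "\<lambda>X. C ** X ** C = C \<and> X ** C ** X = X \<and>
      transpose (C ** X) = C ** X \<and> transpose (X ** C) = X ** C"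
  have P0: "?P X0"
  proof (intro conjI)
    show "C ** X0 ** C = C" using X0C by (simp add: matrix_mul_assoc[symmetric])
    show "X0 ** C ** X0 = X0" using X0C by simp
    show "transpose (C ** X0) = C ** X0"
      by (simp add: X0_def matrix_transpose_mul Gisym matrix_mul_assoc)
    show "transpose (X0 ** C) = X0 ** C" using X0C by (simp add: transpose_mat)
  qed
  have uniq: "X = X0" if "?P X" for X
  proof -
    have "transpose C ** (C ** X) = transpose C ** transpose (C ** X)" using that by simp
    also have "\<dots> = transpose (C ** X ** C)" by (simp add: matrix_transpose_mul)
    also have "\<dots> = transpose C" using that by simp
    finally have "G ** X = transpose C" by (simp add: G_def matrix_mul_assoc)
    then have "Gi ** (G ** X) = X0" by (simp add: X0_def)
    then show ?thesis using Gi by (simp add: matrix_mul_assoc)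
  qed
  have "mp_pinv C = X0" unfolding mp_pinv_def
    by (rule the_equality[where P="?P", OF P0 uniq])
  then show ?thesis using X0C by simp
qed

theorem theorem7:
  fixes N :: nat
    and B :: "real^'m^'n" and C :: "real^'n^'p" and x0 :: "real^'n"
    and r :: "nat \<Rightarrow> real^'p" and Ar :: "real^'n^'n" and ur :: "nat \<Rightarrow> real^'m"
    and \<omega> \<beta> :: real and \<omega>s :: "nat \<Rightarrow> real"
    and S :: "((real^'n^'n) \<times> (real^'m) list) set"
  assumes "N \<ge> 1"
    and "rank C = CARD('n)"
    and "r 0 = C *v x0"
    and "\<omega> \<ge> 0" and "\<forall>t<N. \<omega>s t \<ge> 0"
    and "\<beta> > 0"
    and "\<forall>Aa U. (Aa, U) \<in> amopul2_feasible N B C r ur \<beta> \<omega> \<omega>s S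
              \<longrightarrow> spec_norm ((C ** Aa) ** mp_pinv C) \<le> \<beta>"
  shows "amopul2_feasible N B C r ur \<beta> \<omega> \<omega>s S \<subseteq> mopul2_feasible N B C x0 r ur \<omega> \<omega>s S
       \<and> opt_val Ar (mopul2_feasible N B C x0 r ur \<omega> \<omega>s S)
           \<le> opt_val Ar (amopul2_feasible N B C r ur \<beta> \<omega> \<omega>s S)"
proof -
  let ?F = "amopul2_feasible N B C r ur \<beta> \<omega> \<omega>s S"
  let ?H = "mopul2_feasible N B C x0 r ur \<omega> \<omega>s S"
  have PC: "mp_pinv C ** C = mat 1" using pinv_left assms(2) by blast
  have sub: "?F \<subseteq> ?H"
  proof
    fix AU assume AU: "AU \<in> ?F"
    obtain A U where AUe: "AU = (A, U)" by (cases AU)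
    have F: "length U = N"
      "(\<Sum>t=1..N. norm (((C ** A) ** mp_pinv C) *v r (t - 1) + C *v (B *v (U ! (t - 1))) - r t))
           \<le> \<omega> / (\<Sum>i<N. \<beta> ^ i)"
      "\<forall>t<N. norm (U ! t - ur t) \<le> \<omega>s t" "(A, U) \<in> S"
      using AU unfolding AUe amopul2_feasible_def by auto
    define M where "M = (C ** A) ** mp_pinv C"
    have Mb: "spec_norm M \<le> \<beta>" using assms(7) AU unfolding AUe M_def by blast
    define e where "e t = C *v state A B U x0 t - r t" for t
    define d where "d t = M *v r (t - 1) + C *v (B *v (U ! (t - 1))) - r t" for t
    define a where "a t = norm (e t)" for t
    define D where "D t = norm (d t)" for t
    define T where "T = (\<Sum>t=1..N. D t)"
    define G where "G n = (\<Sum>i<n. \<beta> ^ i)" for n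
    have e0: "a 0 = 0" using assms(3) by (simp add: a_def e_def)
    have Dnn: "D t \<ge> 0" for t by (simp add: D_def)
    have rec: "a (Suc t) \<le> \<beta> * a t + D (Suc t)" for t
    proof -
      have "M *v (C *v state A B U x0 t) = C *v (A *v state A B U x0 t)"
        proof -
        have "mp_pinv C *v (C *v state A B U x0 t) = state A B U x0 t"
          by (simp add: matrix_vector_mul_assoc PC)
        then show ?thesis unfolding M_def by (simp add: matrix_vector_mul_assoc[symmetric])
      qed
      then have "e (Suc t) = M *v e t + d (Suc t)"
        by (simp add: e_def d_def matrix_vector_mult_diff_distrib matrix_vector_right_distrib algebra_simps)
      then have "a (Suc t) \<le> norm (M *v e t) + D (Suc t)"
        by (simp add: a_def D_def norm_triangle_ineq)
      also have "norm (M *v e t) \<le> spec_norm M * a t"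
        unfolding spec_norm_def a_def by (rule onorm) simp
      also have "\<dots> \<le> \<beta> * a t" using Mb by (simp add: a_def mult_right_mono)
      finally show ?thesis by simp
    qed
    have Gpos: "G n \<ge> 0" for n unfolding G_def using assms(6) by (simp add: sum_nonneg)
    have key: "n \<le> N \<Longrightarrow> (\<Sum>t=1..n. a t) \<le> G n * T" for n
    proof (induction n)
      case 0 then show ?case by (simp add: G_def)
    next
      case (Suc n)
      have "(\<Sum>t=1..Suc n. a t) \<le> (\<Sum>t=1..Suc n. \<beta> * a (t - 1) + D t)"
      proof (rule sum_mono)
        fix t assume "t \<in> {1..Suc n}"
        then obtain k where "t = Suc k" by (cases t) auto
        then show "a t \<le> \<beta> * a (t - 1) + D t" using rec by simp
      qed
      also have "\<dots> = \<beta> * (\<Sum>t=1..Suc n. a (t - 1)) + (\<Sum>t=1..Suc n. D t)"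
        by (simp only: sum.distrib sum_distrib_left)
      also have "(\<Sum>t=1..Suc n. a (t - 1)) = (\<Sum>t=1..n. a t)"
      proof -
        have "(\<Sum>t=1..Suc n. a (t - 1)) = (\<Sum>t=0..n. a t)"
          by (rule sum.reindex_bij_witness[where i="\<lambda>t. t + 1" and j="\<lambda>t. t - 1"]) auto
        also have "\<dots> = a 0 + (\<Sum>t=1..n. a t)" by (simp add: sum.atLeast_Suc_atMost)
        finally show ?thesis using e0 by simp
      qed
      also have "(\<Sum>t=1..Suc n. D t) \<le> T"
        unfolding T_def using Suc.prems Dnn by (intro sum_mono2) auto
      also have "(\<Sum>t=1..n. a t) \<le> G n * T" using Suc by simp
      finally have "(\<Sum>t=1..Suc n. a t) \<le> \<beta> * (G n * T) + T"
        using assms(6) by (simp add: mult_left_mono)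
      also have "\<dots> = G (Suc n) * T"
        by (simp add: G_def sum.lessThan_Suc_shift sum_distrib_left algebra_simps power_Suc del: sum.lessThan_Suc)
      finally show ?case .
    qed
    have GN: "G N > 0"
    proof -
      have "G N = 1 + (\<Sum>i<N - 1. \<beta> ^ Suc i)"
        using assms(1) unfolding G_def
        by (metis Suc_diff_1 less_le_trans zero_less_one sum.lessThan_Suc_shift power_0)
      moreover have "(\<Sum>i<N - 1. \<beta> ^ Suc i) \<ge> 0" using assms(6) by (simp add: sum_nonneg)
      ultimately show ?thesis by simp
    qed
    have TB: "T \<le> \<omega> / G N" using F(2) unfolding T_def D_def d_def M_def G_def by simp
    have "(\<Sum>t=1..N. a t) \<le> G N * T" using key by simp
    also have "\<dots> \<le> G N * (\<omega> / G N)" using TB GN by (intro mult_left_mono) auto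
    also have "\<dots> = \<omega>" using GN by simp
    finally have "(\<Sum>t=1..N. norm (C *v state A B U x0 t - r t)) \<le> \<omega>"
      by (simp add: a_def e_def)
    then show "AU \<in> ?H" unfolding AUe mopul2_feasible_def using F by auto
  qed
  moreover have "opt_val Ar ?H \<le> opt_val Ar ?F"
    unfolding opt_val_def by (rule INF_superset_mono[OF sub]) simp
  ultimately show ?thesis by blast
qed

end
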